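(* Let $U$ be a finite set, $(T,I,N)$ an IMTL triplet, $\widetilde{R}$ a $T$-preorder relation on $U$, $A\subseteq U$ a crisp set with $A\neq\emptyset$ and $coA=U\setminus A\neq\emptyset$ (identified with the fuzzy set $A(u)=1$ for $u\in A$, $A(u)=0$ otherwise), and $L:\mathbb{R}\times\mathbb{R}\to\mathbb{R}^+$ a loss function of $\lor$-type. Let $\hat{A}:U\to[0,1]$ be an optimal solution of $$\text{minimize }\sum_{u\in U}L(A(u),\hat{A}(u))\quad\text{subject to } T(\widetilde{R}(u,v),\hat{A}(v))\le\hat{A}(u)\ (u,v\in U),\quad 0\le\hat{A}(u)\le1\ (u\in U).$$ Then: for every $u\in A$ there is $v\in coA$ such that $\widetilde{R}^-_{N(\hat{A}(v))}(v)$ is adjacent to $\widetilde{R}^+_{\hat{A}(u)}(u)$; and for every $u\in coA$ there is $v\in A$ such that $\widetilde{R}^+_{\hat{A}(v)}(v)$ is adjacent to $\widetilde{R}^-_{N(\hat{A}(u))}(u)$.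
   Context: A residual triplet $(T,I,N)$ consists of a left-continuous $t$-norm $T$, its residual implicator $I(x,y)=\sup\{\beta\in[0,1]: T(x,\beta)\le y\}$ and $N(x)=I(x,0)$; it is IMTL if $N$ is involutive. $\widetilde{R}:U\times U\to[0,1]$ is a $T$-preorder if reflexive and $T$-transitive. Granules: $\widetilde{R}^+_\lambda(u)$ is the fuzzy set $w\mapsto T(\widetilde{R}(w,u),\lambda)$ and $\widetilde{R}^-_\lambda(v)$ is $w\mapsto T(\widetilde{R}(v,w),\lambda)$. Adjacency: for $x,y\in U$, $\widetilde{R}^-_{\lambda_2}(y)$ is adjacent to $\widetilde{R}^+_{\lambda_1}(x)$ if $\lambda_1=I(\lambda_2,N(\widetilde{R}(y,x)))$; $\widetilde{R}^+_{\lambda_1}(x)$ is adjacent to $\widetilde{R}^-_{\lambda_2}(y)$ if $\lambda_2=I(\lambda_1,N(\widetilde{R}(y,x)))$. A loss function $L$ is of $\lor$-type if for every real $a$: $L(a,a)=0$; $x\mapsto L(x,a)$ and $x\mapsto L(a,x)$ are increasing for $x>a$ and decreasing for $x<a$. *)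

theory Defs
  imports "HOL-Analysis.Analysis"
begin

definition is_tnorm :: "(real \<Rightarrow> real \<Rightarrow> real) \<Rightarrow> bool" where
  "is_tnorm T \<longleftrightarrow>
     (\<forall>x\<in>{0..1}. \<forall>y\<in>{0..1}. T x y \<in> {0..1}) \<and>
     (\<forall>x\<in>{0..1}. \<forall>y\<in>{0..1}. T x y = T y x) \<and>
     (\<forall>x\<in>{0..1}. \<forall>y\<in>{0..1}. \<forall>z\<in>{0..1}. T (T x y) z = T x (T y z)) \<and>
     (\<forall>x\<in>{0..1}. \<forall>x'\<in>{0..1}. \<forall>y\<in>{0..1}. x \<le> x' \<longrightarrow> T x y \<le> T x' y) \<and>
     (\<forall>x\<in>{0..1}. T x 1 = x)"

definition left_continuous_tnorm :: "(real \<Rightarrow> real \<Rightarrow> real) \<Rightarrow> bool" where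
  "left_continuous_tnorm T \<longleftrightarrow> is_tnorm T \<and>
     (\<forall>y\<in>{0..1}. \<forall>x\<in>{0<..1}. continuous (at_left x) (\<lambda>z. T z y))"

definition resid :: "(real \<Rightarrow> real \<Rightarrow> real) \<Rightarrow> real \<Rightarrow> real \<Rightarrow> real" where
  "resid T x y = Sup {b. 0 \<le> b \<and> b \<le> 1 \<and> T x b \<le> y}"

definition rneg :: "(real \<Rightarrow> real \<Rightarrow> real) \<Rightarrow> real \<Rightarrow> real" where
  "rneg T x = resid T x 0"

text \<open>(T,I,N) is an IMTL residual triplet: T left-continuous and N involutive.\<close>
definition IMTL :: "(real \<Rightarrow> real \<Rightarrow> real) \<Rightarrow> bool" where
  "IMTL T \<longleftrightarrow> left_continuous_tnorm T \<and> (\<forall>x\<in>{0..1}. rneg T (rneg T x) = x)"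

definition T_preorder :: "(real \<Rightarrow> real \<Rightarrow> real) \<Rightarrow> 'a set \<Rightarrow> ('a \<Rightarrow> 'a \<Rightarrow> real) \<Rightarrow> bool" where
  "T_preorder T U R \<longleftrightarrow>
     (\<forall>u\<in>U. \<forall>v\<in>U. 0 \<le> R u v \<and> R u v \<le> 1) \<and>
     (\<forall>u\<in>U. R u u = 1) \<and>
     (\<forall>u\<in>U. \<forall>v\<in>U. \<forall>w\<in>U. T (R u v) (R v w) \<le> R u w)"

definition granule_plus :: "(real \<Rightarrow> real \<Rightarrow> real) \<Rightarrow> ('a \<Rightarrow> 'a \<Rightarrow> real) \<Rightarrow> real \<Rightarrow> 'a \<Rightarrow> 'a \<Rightarrow> real" where
  "granule_plus T R l u = (\<lambda>w. T (R w u) l)"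

definition granule_minus :: "(real \<Rightarrow> real \<Rightarrow> real) \<Rightarrow> ('a \<Rightarrow> 'a \<Rightarrow> real) \<Rightarrow> real \<Rightarrow> 'a \<Rightarrow> 'a \<Rightarrow> real" where
  "granule_minus T R l v = (\<lambda>w. T (R v w) l)"

text \<open>Adjacency, defined on the parameters of the granules as in the paper:
  adj_minus_to_plus T R y l2 x l1: R^-_{l2}(y) is adjacent to R^+_{l1}(x);
  adj_plus_to_minus T R x l1 y l2: R^+_{l1}(x) is adjacent to R^-_{l2}(y).\<close>
definition adj_minus_to_plus :: "(real \<Rightarrow> real \<Rightarrow> real) \<Rightarrow> ('a \<Rightarrow> 'a \<Rightarrow> real) \<Rightarrow> 'a \<Rightarrow> real \<Rightarrow> 'a \<Rightarrow> real \<Rightarrow> bool" where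
  "adj_minus_to_plus T R y l2 x l1 \<longleftrightarrow> l1 = resid T l2 (rneg T (R y x))"

definition adj_plus_to_minus :: "(real \<Rightarrow> real \<Rightarrow> real) \<Rightarrow> ('a \<Rightarrow> 'a \<Rightarrow> real) \<Rightarrow> 'a \<Rightarrow> real \<Rightarrow> 'a \<Rightarrow> real \<Rightarrow> bool" where
  "adj_plus_to_minus T R x l1 y l2 \<longleftrightarrow> l2 = resid T l1 (rneg T (R y x))"

text \<open>Loss function of join-type, with values in R+ (nonnegative); monotonicity read strictly.\<close>
definition vee_type_loss :: "(real \<Rightarrow> real \<Rightarrow> real) \<Rightarrow> bool" where
  "vee_type_loss L \<longleftrightarrow>
     (\<forall>x y. 0 \<le> L x y) \<and>
     (\<forall>a. L a a = 0 \<and>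
        (\<forall>x y. a < x \<longrightarrow> x < y \<longrightarrow> L x a < L y a \<and> L a x < L a y) \<and>
        (\<forall>x y. x < y \<longrightarrow> y < a \<longrightarrow> L y a < L x a \<and> L a y < L a x))"

definition crisp :: "'a set \<Rightarrow> 'a \<Rightarrow> real" where
  "crisp A u = (if u \<in> A then 1 else 0)"

definition feasible :: "(real \<Rightarrow> real \<Rightarrow> real) \<Rightarrow> 'a set \<Rightarrow> ('a \<Rightarrow> 'a \<Rightarrow> real) \<Rightarrow> ('a \<Rightarrow> real) \<Rightarrow> bool" where
  "feasible T U R h \<longleftrightarrow>
     (\<forall>u\<in>U. \<forall>v\<in>U. T (R u v) (h v) \<le> h u) \<and> (\<forall>u\<in>U. 0 \<le> h u \<and> h u \<le> 1)"

definition optimal_solution :: "(real \<Rightarrow> real \<Rightarrow> real) \<Rightarrow> 'a set \<Rightarrow> ('a \<Rightarrow> 'a \<Rightarrow> real)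
    \<Rightarrow> (real \<Rightarrow> real \<Rightarrow> real) \<Rightarrow> 'a set \<Rightarrow> ('a \<Rightarrow> real) \<Rightarrow> bool" where
  "optimal_solution T U R L A h \<longleftrightarrow> feasible T U R h \<and>
     (\<forall>g. feasible T U R g \<longrightarrow> (\<Sum>u\<in>U. L (crisp A u) (h u)) \<le> (\<Sum>u\<in>U. L (crisp A u) (g u)))"

end

theory Submission
  imports Defs
begin

lemma tn_props:
  assumes "IMTL T"
  shows tn_range: "\<And>x y. x\<in>{0..1} \<Longrightarrow> y\<in>{0..1} \<Longrightarrow> T x y \<in> {0..1}"
    and tn_comm: "\<And>x y. x\<in>{0..1} \<Longrightarrow> y\<in>{0..1} \<Longrightarrow> T x y = T y x"
    and tn_assoc: "\<And>x y z. x\<in>{0..1} \<Longrightarrow> y\<in>{0..1} \<Longrightarrow> z\<in>{0..1} \<Longrightarrow> T (T x y) z = T x (T y z)"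
    and tn_mono1: "\<And>x x' y. x\<in>{0..1} \<Longrightarrow> x'\<in>{0..1} \<Longrightarrow> y\<in>{0..1} \<Longrightarrow> x \<le> x' \<Longrightarrow> T x y \<le> T x' y"
    and tn_one: "\<And>x. x\<in>{0..1} \<Longrightarrow> T x 1 = x"
  using assms unfolding IMTL_def left_continuous_tnorm_def is_tnorm_def by blast+

lemma tn_mono2:
  assumes "IMTL T" "x\<in>{0..1}" "y\<in>{0..1}" "y'\<in>{0..1}" "y \<le> y'"
  shows "T x y \<le> T x y'"
  using tn_comm[OF assms(1)] tn_mono1[OF assms(1)] assms by metis

lemma tn_one1: assumes "IMTL T" "x\<in>{0..1}" shows "T 1 x = x"
  using tn_comm[OF assms(1)] tn_one[OF assms(1)] assms by force

lemma tn_zero: assumes "IMTL T" "x\<in>{0..1}" shows "T x 0 = 0"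
proof -
  have "T x 0 \<le> T 1 0" using tn_mono1[OF assms(1), of x 1 0] assms by auto
  also have "\<dots> = 0" using tn_one1[OF assms(1), of 0] by auto
  finally show ?thesis using tn_range[OF assms(1), of x 0] assms by auto
qed

lemma N_set:
  assumes "IMTL T" "a\<in>{0..1}"
  shows "0 \<in> {b. 0 \<le> b \<and> b \<le> 1 \<and> T a b \<le> 0}" "bdd_above {b. 0 \<le> b \<and> b \<le> 1 \<and> T a b \<le> 0}"
  using tn_zero[OF assms] by (auto intro: bdd_aboveI[where M=1])

lemma N_range: assumes "IMTL T" "a\<in>{0..1}" shows "rneg T a \<in> {0..1}"
proof -
  note s = N_set[OF assms]
  have "0 \<le> rneg T a" unfolding rneg_def resid_def using cSup_upper[OF s] by auto
  moreover have "rneg T a \<le> 1" unfolding rneg_def resid_def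
    by (rule cSup_least) (use s(1) in blast, auto)
  ultimately show ?thesis by auto
qed

lemma T_N_zero: assumes "IMTL T" "a\<in>{0..1}" shows "T a (rneg T a) = 0"
proof -
  let ?S = "{b. 0 \<le> b \<and> b \<le> 1 \<and> T a b \<le> 0}"
  note s = N_set[OF assms]
  define c where "c = rneg T a"
  have c01: "c \<in> {0..1}" using N_range[OF assms] c_def by auto
  have below: "T a b = 0" if "b \<in> {0..<c}" for b
  proof -
    have "b < Sup ?S" using that c_def unfolding rneg_def resid_def by auto
    then obtain b' where b': "b' \<in> ?S" "b < b'" using less_cSup_iff[of ?S b] s by blast
    have "T a b \<le> T a b'" using tn_mono2[OF assms(1,2), of b b'] b' that by auto
    then show ?thesis using b' tn_range[OF assms(1,2), of b] that c01 by auto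
  qed
  show ?thesis
  proof (cases "c = 0")
    case True then show ?thesis using c_def tn_zero[OF assms] by simp
  next
    case False
    then have cpos: "c \<in> {0<..1}" using c01 by auto
    have cont: "((\<lambda>z. T z a) \<longlongrightarrow> T c a) (at_left c)"
      using assms(1) cpos assms(2) unfolding IMTL_def left_continuous_tnorm_def continuous_within
      by auto
    have ev: "\<forall>\<^sub>F z in at_left c. 0 = T z a"
    proof -
      have "\<forall>\<^sub>F z in at_left c. z \<in> {0<..<c}" using cpos eventually_at_left_real by auto
      then show ?thesis
        apply (rule eventually_mono)
        using below tn_comm[OF assms(1)] assms(2) c01 by fastforce
    qed
    have "((\<lambda>z. T z a) \<longlongrightarrow> 0) (at_left c)"
      using Lim_transform_eventually[OF tendsto_const ev] .
    then have "T c a = 0" using tendsto_unique[OF trivial_limit_at_left_real cont] by auto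
    then show ?thesis using c_def tn_comm[OF assms(1) c01 assms(2)] by simp
  qed
qed

lemma zero_iff:
  assumes "IMTL T" "a\<in>{0..1}" "b\<in>{0..1}"
  shows "T a b \<le> 0 \<longleftrightarrow> b \<le> rneg T a"
proof
  assume "T a b \<le> 0"
  then show "b \<le> rneg T a" unfolding rneg_def resid_def using assms
    by (intro cSup_upper N_set(2)[OF assms(1,2)]) auto
next
  assume "b \<le> rneg T a"
  then have "T a b \<le> T a (rneg T a)" using tn_mono2[OF assms(1,2) assms(3) N_range[OF assms(1,2)]] by auto
  then show "T a b \<le> 0" using T_N_zero[OF assms(1,2)] by simp
qed

lemma N_swap:
  assumes "IMTL T" "a\<in>{0..1}" "b\<in>{0..1}"
  shows "b \<le> rneg T a \<longleftrightarrow> a \<le> rneg T b"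
  using zero_iff[OF assms] zero_iff[OF assms(1,3,2)] tn_comm[OF assms(1)] assms by metis

lemma NN: assumes "IMTL T" "a\<in>{0..1}" shows "rneg T (rneg T a) = a"
  using assms unfolding IMTL_def by blast

lemma N_anti: assumes "IMTL T" "a\<in>{0..1}" "b\<in>{0..1}"
  shows "rneg T b \<le> rneg T a \<longleftrightarrow> a \<le> b"
  using N_swap[OF assms(1,2) N_range[OF assms(1,3)]] NN[OF assms(1,3)] by simp

lemma key:
  assumes "IMTL T" "x\<in>{0..1}" "y\<in>{0..1}" "z\<in>{0..1}"
  shows "T x y \<le> z \<longleftrightarrow> T x (rneg T z) \<le> rneg T y"
proof -
  note I = assms(1)
  have r: "T x y \<in> {0..1}" "rneg T z \<in> {0..1}" "T x (rneg T z) \<in> {0..1}"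
    using tn_range[OF I] N_range[OF I] assms by auto
  have "T x y \<le> z \<longleftrightarrow> T x y \<le> rneg T (rneg T z)" using NN[OF I assms(4)] by simp
  also have "\<dots> \<longleftrightarrow> T (T x y) (rneg T z) \<le> 0" using zero_iff[OF I r(1,2)] N_swap[OF I r(1,2)] by simp
  also have "T (T x y) (rneg T z) = T (T x (rneg T z)) y"
    using tn_assoc[OF I] tn_comm[OF I] assms r by metis
  also have "\<dots> \<le> 0 \<longleftrightarrow> y \<le> rneg T (T x (rneg T z))" using zero_iff[OF I r(3) assms(3)] by simp
  also have "\<dots> \<longleftrightarrow> T x (rneg T z) \<le> rneg T y" using N_swap[OF I r(3) assms(3)] by simp
  finally show ?thesis .
qed

lemma resid_N:
  assumes "IMTL T" "x\<in>{0..1}" "y\<in>{0..1}"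
  shows "resid T x (rneg T y) = rneg T (T x y)"
proof -
  note I = assms(1)
  have r: "T x y \<in> {0..1}" "rneg T (T x y) \<in> {0..1}" using tn_range[OF I] N_range[OF I] assms by auto
  have "{b. 0 \<le> b \<and> b \<le> 1 \<and> T x b \<le> rneg T y} = {0..rneg T (T x y)}"
  proof (intro set_eqI iffI)
    fix b assume "b \<in> {b. 0 \<le> b \<and> b \<le> 1 \<and> T x b \<le> rneg T y}"
    then have b: "0 \<le> b" "b \<le> 1" "T x b \<le> rneg T y" by auto
    then have bb: "b \<in> {0..1}" "T x b \<in> {0..1}" using tn_range[OF I] assms by auto
    have "T (T x b) y \<le> 0" using b(3) zero_iff[OF I bb(2) assms(3)] N_swap[OF I bb(2) assms(3)] by simp
    moreover have "T (T x b) y = T (T x y) b" using tn_assoc[OF I] tn_comm[OF I] assms bb by metis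
    ultimately show "b \<in> {0..rneg T (T x y)}" using zero_iff[OF I r(1) bb(1)] b by simp
  next
    fix b assume "b \<in> {0..rneg T (T x y)}"
    then have b: "0 \<le> b" "b \<le> rneg T (T x y)" by auto
    then have bb: "b \<in> {0..1}" "T x b \<in> {0..1}" using tn_range[OF I] assms r by auto
    have "T (T x y) b \<le> 0" using b zero_iff[OF I r(1) bb(1)] by simp
    moreover have "T (T x b) y = T (T x y) b" using tn_assoc[OF I] tn_comm[OF I] assms bb by metis
    ultimately show "b \<in> {b. 0 \<le> b \<and> b \<le> 1 \<and> T x b \<le> rneg T y}" using bb zero_iff[OF I bb(2) assms(3)] N_swap[OF I bb(2) assms(3)] by simp
  qed
  then show ?thesis unfolding resid_def using r by simp
qed


lemma loss_dec:
  assumes "vee_type_loss L" "x \<le> y" "y \<le> a"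
  shows "L a y \<le> L a x" and "x < y \<Longrightarrow> L a y < L a x"
proof -
  have L0: "\<And>p q. 0 \<le> L p q" "\<And>p. L p p = 0"
    and m: "\<And>p q. q < p \<Longrightarrow> p < a \<Longrightarrow> L a p < L a q"
    using assms(1) unfolding vee_type_loss_def by blast+
  have st: "L a y' < L a x'" if "x' < y'" "y' \<le> a" for x' y' :: real
  proof (cases "y' = a")
    case True
    have "L a ((x'+a)/2) < L a x'" using m[of x' "(x'+a)/2"] that True by auto
    then show ?thesis using L0(1)[of a "(x'+a)/2"] True L0(2) by auto
  next
    case False then show ?thesis using m[of x' y'] that by auto
  qed
  show "x < y \<Longrightarrow> L a y < L a x" using st assms(3) by blast
  show "L a y \<le> L a x" using st[of x y] assms(2,3) by (cases "x = y") auto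
qed

lemma loss_inc:
  assumes "vee_type_loss L" "x \<le> y" "a \<le> x"
  shows "L a x \<le> L a y" and "x < y \<Longrightarrow> L a x < L a y"
proof -
  have L0: "\<And>p q. 0 \<le> L p q" "\<And>p. L p p = 0"
    and m: "\<And>p q. a < p \<Longrightarrow> p < q \<Longrightarrow> L a p < L a q"
    using assms(1) unfolding vee_type_loss_def by blast+
  have st: "L a x' < L a y'" if "x' < y'" "a \<le> x'" for x' y' :: real
  proof (cases "x' = a")
    case True
    have "L a ((y'+a)/2) < L a y'" using m[of "(y'+a)/2" y'] that True by auto
    then show ?thesis using L0(1)[of a "(y'+a)/2"] True L0(2) by auto
  next
    case False then show ?thesis using m[of x' y'] that by auto
  qed
  show "x < y \<Longrightarrow> L a x < L a y" using st assms(3) by blast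
  show "L a x \<le> L a y" using st[of x y] assms(2,3) by (cases "x = y") auto
qed

lemma lift:
  assumes I: "IMTL T"
    and Sr: "\<forall>w\<in>U. \<forall>w'\<in>U. S w w' \<in> {0..1}"
    and St: "\<forall>w\<in>U. \<forall>w'\<in>U. \<forall>w''\<in>U. T (S w w') (S w' w'') \<le> S w w''"
    and fr: "\<forall>w\<in>U. f w \<in> {0..1}"
    and ff: "\<forall>w\<in>U. \<forall>w'\<in>U. T (S w w') (f w') \<le> f w"
    and u: "u \<in> U" and l: "l \<in> {0..1}"
  shows "\<forall>w\<in>U. \<forall>w'\<in>U. T (S w w') (max (f w') (T (S w' u) l)) \<le> max (f w) (T (S w u) l)"
proof (intro ballI)
  fix w w' assume w: "w \<in> U" "w' \<in> U"
  have r: "S w w' \<in> {0..1}" "S w' u \<in> {0..1}" "S w u \<in> {0..1}" "f w' \<in> {0..1}" "f w \<in> {0..1}"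
    using Sr fr w u by auto
  have r2: "T (S w' u) l \<in> {0..1}" "T (S w u) l \<in> {0..1}" using tn_range[OF I] r l by auto
  show "T (S w w') (max (f w') (T (S w' u) l)) \<le> max (f w) (T (S w u) l)"
  proof (cases "f w' \<le> T (S w' u) l")
    case True
    have "T (S w w') (T (S w' u) l) = T (T (S w w') (S w' u)) l"
      using tn_assoc[OF I] r l by metis
    also have "\<dots> \<le> T (S w u) l"
      using tn_mono1[OF I] St w u r l tn_range[OF I] by blast
    finally show ?thesis using True by simp
  next
    case False
    then have "max (f w') (T (S w' u) l) = f w'" by simp
    then show ?thesis using ff w by (simp add: le_max_iff_disj)
  qed
qed


theorem proposition7:
  fixes U A :: "'a set" and T L :: "real \<Rightarrow> real \<Rightarrow> real"
    and R :: "'a \<Rightarrow> 'a \<Rightarrow> real" and Ah :: "'a \<Rightarrow> real"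
  assumes "finite U"
    and "IMTL T"
    and "T_preorder T U R"
    and "A \<subseteq> U" and "A \<noteq> {}" and "U - A \<noteq> {}"
    and "vee_type_loss L"
    and "optimal_solution T U R L A Ah"
  shows "(\<forall>u\<in>A. \<exists>v\<in>U - A. adj_minus_to_plus T R v (rneg T (Ah v)) u (Ah u)) \<and>
         (\<forall>u\<in>U - A. \<exists>v\<in>A. adj_plus_to_minus T R v (Ah v) u (rneg T (Ah u)))"
proof -
  note I = assms(2)
  define N where "N = rneg T"
  define h where "h = Ah"
  have Rr: "\<forall>w\<in>U. \<forall>w'\<in>U. R w w' \<in> {0..1}" and R1: "\<forall>w\<in>U. R w w = 1"
    and Rt: "\<forall>w\<in>U. \<forall>w'\<in>U. \<forall>w''\<in>U. T (R w w') (R w' w'') \<le> R w w''"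
    using assms(3) unfolding T_preorder_def by auto
  have hr: "\<forall>w\<in>U. h w \<in> {0..1}" and hf: "\<forall>w\<in>U. \<forall>w'\<in>U. T (R w w') (h w') \<le> h w"
    using assms(8) unfolding optimal_solution_def feasible_def h_def by auto
  have opt: "\<And>g. feasible T U R g \<Longrightarrow> (\<Sum>w\<in>U. L (crisp A w) (h w)) \<le> (\<Sum>w\<in>U. L (crisp A w) (g w))"
    using assms(8) unfolding optimal_solution_def h_def by blast
  have fin: "finite (U - A)" "finite A" using assms(1,4) finite_subset by auto
  have Nr: "\<And>x. x \<in> {0..1} \<Longrightarrow> N x \<in> {0..1}" using N_range[OF I] N_def by auto
  have NN': "\<And>x. x \<in> {0..1} \<Longrightarrow> N (N x) = x" using NN[OF I] N_def by auto
  have Nanti: "\<And>a b. a \<in> {0..1} \<Longrightarrow> b \<in> {0..1} \<Longrightarrow> N b \<le> N a \<longleftrightarrow> a \<le> b"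
    using N_anti[OF I] N_def by auto
  have key': "\<And>x y z. x\<in>{0..1} \<Longrightarrow> y\<in>{0..1} \<Longrightarrow> z\<in>{0..1} \<Longrightarrow> T x y \<le> z \<longleftrightarrow> T x (N z) \<le> N y"
    using key[OF I] N_def by auto
  have Tr: "\<And>x y. x\<in>{0..1} \<Longrightarrow> y\<in>{0..1} \<Longrightarrow> T x y \<in> {0..1}" using tn_range[OF I] by auto

  have part1: "\<exists>v\<in>U - A. N (h u) \<le> T (R v u) (N (h v))" if uA: "u \<in> A" for u
  proof (rule ccontr)
    assume "\<not> ?thesis"
    then have lt: "\<forall>v\<in>U - A. T (R v u) (N (h v)) < N (h u)" by (auto simp: not_le)
    have uU: "u \<in> U" using uA assms(4) by auto
    define F where "F = (\<lambda>v. T (R v u) (N (h v)))"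
    define m where "m = Max (F ` (U - A))"
    have mF: "m \<in> F ` (U - A)" unfolding m_def using fin assms(6) by (intro Max_in) auto
    have Fle: "\<forall>v\<in>U - A. F v \<le> m" unfolding m_def using fin by auto
    have Fr: "\<forall>v\<in>U - A. F v \<in> {0..1}" unfolding F_def using Tr Rr Nr hr uU by auto
    have mr: "m \<in> {0..1}" using mF Fr by auto
    have mlt: "m < N (h u)" using mF lt F_def by auto
    define l where "l = N m"
    have lr: "l \<in> {0..1}" using Nr mr l_def by auto
    have hu: "h u \<in> {0..1}" using hr uU by auto
    have lgt: "h u < l"
    proof (rule ccontr)
      assume "\<not> h u < l"
      then have "N m \<le> N (N (h u))" using l_def NN'[OF hu] by simp
      then have "N (h u) \<le> m" using Nanti[OF Nr[OF hu] mr] by simp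
      then show False using mlt by simp
    qed
    define g where "g = (\<lambda>w. max (h w) (T (R w u) l))"
    have gr: "\<forall>w\<in>U. g w \<in> {0..1}" unfolding g_def using hr Tr Rr uU lr by auto
    have gfeas: "feasible T U R g" unfolding feasible_def
      using lift[OF I Rr Rt hr hf uU lr] gr unfolding g_def by auto
    have gA: "g v = h v" if "v \<in> U - A" for v
    proof -
      have vr: "R v u \<in> {0..1}" "h v \<in> {0..1}" using that Rr hr uU by auto
      have "T (R v u) (N (h v)) \<le> N l" using Fle that F_def l_def NN'[OF mr] by auto
      then have "T (R v u) l \<le> h v" using key'[OF vr(1) lr vr(2)] by simp
      then show ?thesis unfolding g_def by simp
    qed
    have gu: "g u = l" unfolding g_def using R1 uU tn_one1[OF I lr] lgt by auto
    have "(\<Sum>w\<in>U. L (crisp A w) (g w)) < (\<Sum>w\<in>U. L (crisp A w) (h w))"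
    proof (rule sum_strict_mono_ex1[OF assms(1)])
      show "\<forall>w\<in>U. L (crisp A w) (g w) \<le> L (crisp A w) (h w)"
      proof
        fix w assume w: "w \<in> U"
        show "L (crisp A w) (g w) \<le> L (crisp A w) (h w)"
        proof (cases "w \<in> A")
          case True
          then show ?thesis unfolding crisp_def using loss_dec(1)[OF assms(7), of "h w" "g w" 1] gr hr w
            unfolding g_def by auto
        next
          case False then show ?thesis using gA w by simp
        qed
      qed
      show "\<exists>w\<in>U. L (crisp A w) (g w) < L (crisp A w) (h w)"
        using uU uA loss_dec(2)[OF assms(7), of "h u" "g u" 1] gu lgt lr unfolding crisp_def by auto
    qed
    then show False using opt[OF gfeas] by simp
  qed

  have part2: "\<exists>v\<in>A. h u \<le> T (R u v) (h v)" if uA: "u \<in> U - A" for u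
  proof (rule ccontr)
    assume "\<not> ?thesis"
    then have lt: "\<forall>v\<in>A. T (R u v) (h v) < h u" by (auto simp: not_le)
    have uU: "u \<in> U" using uA by auto
    define F where "F = (\<lambda>v. T (R u v) (h v))"
    define m where "m = Max (F ` A)"
    have mF: "m \<in> F ` A" unfolding m_def using fin assms(5) by (intro Max_in) auto
    have Fle: "\<forall>v\<in>A. F v \<le> m" unfolding m_def using fin by auto
    have Fr: "\<forall>v\<in>A. F v \<in> {0..1}" unfolding F_def using Tr Rr hr uU assms(4) by auto
    have mr: "m \<in> {0..1}" using mF Fr by auto
    have mlt: "m < h u" using mF lt F_def by auto
    define l where "l = N m"
    have lr: "l \<in> {0..1}" using Nr mr l_def by auto
    have hu: "h u \<in> {0..1}" using hr uU by auto
    have lgt: "N (h u) < l"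
      using Nanti[OF hu mr] mlt l_def by (auto simp: not_le[symmetric])
    define S where "S = (\<lambda>a b. R b a)"
    define f where "f = (\<lambda>w. N (h w))"
    have Sr: "\<forall>w\<in>U. \<forall>w'\<in>U. S w w' \<in> {0..1}" using Rr S_def by auto
    have St: "\<forall>w\<in>U. \<forall>w'\<in>U. \<forall>w''\<in>U. T (S w w') (S w' w'') \<le> S w w''"
    proof (intro ballI)
      fix w w' w'' assume w: "w \<in> U" "w' \<in> U" "w'' \<in> U"
      have "T (S w w') (S w' w'') = T (R w'' w') (R w' w)"
        unfolding S_def using tn_comm[OF I] Rr w by auto
      also have "\<dots> \<le> S w w''" unfolding S_def using Rt w by auto
      finally show "T (S w w') (S w' w'') \<le> S w w''" .
    qed
    have fr: "\<forall>w\<in>U. f w \<in> {0..1}" using hr Nr f_def by auto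
    have ff: "\<forall>w\<in>U. \<forall>w'\<in>U. T (S w w') (f w') \<le> f w"
    proof (intro ballI)
      fix w w' assume w: "w \<in> U" "w' \<in> U"
      have r: "R w' w \<in> {0..1}" "h w \<in> {0..1}" "h w' \<in> {0..1}" using Rr hr w by auto
      show "T (S w w') (f w') \<le> f w"
        using hf w key'[OF r] unfolding S_def f_def by auto
    qed
    define g' where "g' = (\<lambda>w. max (f w) (T (S w u) l))"
    have g'r: "\<forall>w\<in>U. g' w \<in> {0..1}" unfolding g'_def using fr Tr Sr uU lr by auto
    have g'f: "\<forall>w\<in>U. \<forall>w'\<in>U. T (S w w') (g' w') \<le> g' w"
      using lift[OF I Sr St fr ff uU lr] unfolding g'_def by auto
    define g where "g = (\<lambda>w. N (g' w))"
    have gr: "\<forall>w\<in>U. g w \<in> {0..1}" using g'r Nr g_def by auto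
    have gfeas: "feasible T U R g" unfolding feasible_def
    proof (intro conjI ballI)
      fix w w' assume w: "w \<in> U" "w' \<in> U"
      have r: "R w w' \<in> {0..1}" "g w' \<in> {0..1}" "g w \<in> {0..1}" using Rr gr w by auto
      have "T (R w w') (g' w) \<le> g' w'" using g'f w unfolding S_def by auto
      then have "T (R w w') (N (g w)) \<le> N (g w')" unfolding g_def using NN' g'r w by auto
      then show "T (R w w') (g w') \<le> g w" using key'[OF r] by simp
    next
      fix w assume "w \<in> U" then show "0 \<le> g w" "g w \<le> 1" using gr by auto
    qed
    have gA: "g v = h v" if "v \<in> A" for v
    proof -
      have vU: "v \<in> U" using that assms(4) by auto
      have vr: "R u v \<in> {0..1}" "h v \<in> {0..1}" "N (h v) \<in> {0..1}" using vU Rr hr uU Nr by auto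
      have "T (R u v) (N (N (h v))) \<le> N l" using Fle that F_def l_def NN'[OF mr] NN'[OF vr(2)] by auto
      then have "T (R u v) l \<le> N (h v)" using key'[OF vr(1) lr vr(3)] by simp
      then have "g' v = N (h v)" unfolding g'_def f_def S_def by simp
      then show ?thesis unfolding g_def using NN'[OF vr(2)] by simp
    qed
    have gu: "g u = m"
    proof -
      have "g' u = l" unfolding g'_def f_def S_def using R1 uU tn_one1[OF I lr] lgt by auto
      then show ?thesis unfolding g_def l_def using NN'[OF mr] by simp
    qed
    have "(\<Sum>w\<in>U. L (crisp A w) (g w)) < (\<Sum>w\<in>U. L (crisp A w) (h w))"
    proof (rule sum_strict_mono_ex1[OF assms(1)])
      show "\<forall>w\<in>U. L (crisp A w) (g w) \<le> L (crisp A w) (h w)"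
      proof
        fix w assume w: "w \<in> U"
        show "L (crisp A w) (g w) \<le> L (crisp A w) (h w)"
        proof (cases "w \<in> A")
          case False
          have "f w \<le> g' w" unfolding g'_def by simp
          then have "N (g' w) \<le> N (N (h w))" using Nanti g'r fr w unfolding f_def by auto
          then have "g w \<le> h w" unfolding g_def using NN' hr w by auto
          then show ?thesis unfolding crisp_def using loss_inc(1)[OF assms(7), of "g w" "h w" 0] gr w False
            by auto
        next
          case True then show ?thesis using gA by simp
        qed
      qed
      show "\<exists>w\<in>U. L (crisp A w) (g w) < L (crisp A w) (h w)"
        using uU uA loss_inc(2)[OF assms(7), of "g u" "h u" 0] gu mlt mr unfolding crisp_def by auto
    qed
    then show False using opt[OF gfeas] by simp
  qed

  show ?thesis
  proof (intro conjI ballI)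
    fix u assume uA: "u \<in> A"
    then have uU: "u \<in> U" using assms(4) by auto
    obtain v where v: "v \<in> U - A" "N (h u) \<le> T (R v u) (N (h v))" using part1[OF uA] by blast
    have r: "R v u \<in> {0..1}" "h u \<in> {0..1}" "h v \<in> {0..1}" "N (h v) \<in> {0..1}" using v uU Rr hr Nr by auto
    have "T (R v u) (N (h v)) \<le> N (h u)" using hf v(1) uU key'[OF r(1,2,3)] by auto
    then have eq: "T (R v u) (N (h v)) = N (h u)" using v by simp
    have "resid T (N (h v)) (N (R v u)) = N (T (N (h v)) (R v u))"
      using resid_N[OF I r(4) r(1)] N_def by simp
    also have "\<dots> = h u" using eq tn_comm[OF I r(4) r(1)] NN'[OF r(2)] by simp
    finally show "\<exists>v\<in>U - A. adj_minus_to_plus T R v (rneg T (Ah v)) u (Ah u)"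
      using v(1) unfolding adj_minus_to_plus_def N_def h_def by (intro bexI[of _ v]) auto
  next
    fix u assume uA: "u \<in> U - A"
    then have uU: "u \<in> U" by auto
    obtain v where v: "v \<in> A" "h u \<le> T (R u v) (h v)" using part2[OF uA] by blast
    have vU: "v \<in> U" using v assms(4) by auto
    have r: "R u v \<in> {0..1}" "h v \<in> {0..1}" using vU uU Rr hr by auto
    have "T (R u v) (h v) \<le> h u" using hf vU uU by auto
    then have eq: "T (R u v) (h v) = h u" using v by simp
    have "resid T (h v) (N (R u v)) = N (T (h v) (R u v))"
      using resid_N[OF I r(2) r(1)] N_def by simp
    also have "\<dots> = N (h u)" using eq tn_comm[OF I r(2) r(1)] by simp
    finally show "\<exists>v\<in>A. adj_plus_to_minus T R v (Ah v) u (rneg T (Ah u))"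
      using v(1) unfolding adj_plus_to_minus_def N_def h_def by (intro bexI[of _ v]) auto
  qed
qed

end
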